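(* (i) The admissible monomials of weight vector $(3)|^1$ in $P_5$ are exactly $X_{\alpha,\beta}$, $1\le\alpha<\beta\le5$; hence $\dim QP_5((3)|^1)=10$. (ii) The admissible monomials of weight vector $(3)|^2$ in $P_5$ in which every variable occurs are exactly the following 15: $x_1x_2x_3^{2}x_4^{2}x_5^{3}$, $x_1x_2x_3^{2}x_4^{3}x_5^{2}$, $x_1x_2x_3^{3}x_4^{2}x_5^{2}$, $x_1x_2^{2}x_3x_4^{2}x_5^{3}$, $x_1x_2^{2}x_3x_4^{3}x_5^{2}$, $x_1x_2^{2}x_3^{2}x_4x_5^{3}$, $x_1x_2^{2}x_3^{2}x_4^{3}x_5$, $x_1x_2^{2}x_3^{3}x_4x_5^{2}$, $x_1x_2^{2}x_3^{3}x_4^{2}x_5$, $x_1x_2^{3}x_3x_4^{2}x_5^{2}$, $x_1x_2^{3}x_3^{2}x_4x_5^{2}$, $x_1x_2^{3}x_3^{2}x_4^{2}x_5$, $x_1^{3}x_2x_3x_4^{2}x_5^{2}$, $x_1^{3}x_2x_3^{2}x_4x_5^{2}$, $x_1^{3}x_2x_3^{2}x_4^{2}x_5$. Consequently $\dim QP_5((3)|^2)=55$.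
   Context: $P_5=\mathbb F_2[x_1,\dots,x_5]$, $\deg x_i=1$, a module over the mod-2 Steenrod algebra $\mathcal A$ with augmentation ideal $\mathcal A^+$; $f\equiv g$ means $f+g\in\mathcal A^+P_5$. $X_{\alpha,\beta}=\prod_{l\in\{1,\dots,5\}\setminus\{\alpha,\beta\}}x_l$. For $x=x_1^{a_1}\cdots x_5^{a_5}$: weight vector $\omega_i(x)=\sum_j\alpha_{i-1}(a_j)$ ($\alpha_r(a)$ the $r$-th binary digit), exponent vector $\sigma(x)=(a_1,\dots,a_5)$, both ordered left-lexicographically; $\deg\omega=\sum_i2^{i-1}\omega_i$. For monomials of equal degree, $x<y$ iff $\omega(x)<\omega(y)$, or $\omega(x)=\omega(y)$ and $\sigma(x)<\sigma(y)$; $x$ is inadmissible if $x\equiv\sum_jy_j$ with monomials $y_j<x$, otherwise admissible. $(3)|^d$ is the weight vector with first $d$ entries $3$ and rest $0$. $P_5(\omega)$ is spanned by monomials $y$ with $\deg y=\deg\omega$ and $\omega(y)\le\omega$, $P_5^-(\omega)$ by those with $\omega(y)<\omega$, and $QP_5(\omega)=P_5(\omega)/(P_5(\omega)\cap(\mathcal A^+P_5+P_5^-(\omega)))$. *)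

theory Defs
  imports Main
begin

text \<open>Monomials of P_5 are exponent lists of length 5 (entry j is the exponent of x_(j+1)).
  Polynomials over F_2 are finite sets of monomials; addition is symmetric difference.\<close>

type_synonym mono = "nat list"
type_synonym poly = "nat list set"

definition padd :: "poly \<Rightarrow> poly \<Rightarrow> poly" where
  "padd p q = (p - q) \<union> (q - p)"

inductive_set f2span :: "poly set \<Rightarrow> poly set" for S where
  zero: "{} \<in> f2span S"
| add: "p \<in> f2span S \<Longrightarrow> s \<in> S \<Longrightarrow> padd p s \<in> f2span S"

text \<open>Sq^k on a monomial, via Sq^k(x^n) = (n choose k) x^(n+k) and the Cartan formula, mod 2.\<close>
definition sq :: "nat \<Rightarrow> mono \<Rightarrow> poly" where
  "sq k a = {b. length b = length a \<and>
      (\<forall>j<length a. a!j \<le> b!j \<and> odd ((a!j) choose (b!j - a!j))) \<and>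
      sum_list b = sum_list a + k}"

definition hitgens :: "poly set" where
  "hitgens = {sq i a | i a. 0 < i \<and> length a = 5}"

definition hit :: "poly set" where
  "hit = f2span hitgens"

text \<open>Weight vector: weight a i = omega_(i+1)(a) = sum_j alpha_i(a_j).\<close>
definition weight :: "mono \<Rightarrow> nat \<Rightarrow> nat" where
  "weight a i = (\<Sum>j<length a. (a!j div 2^i) mod 2)"

definition wdeg :: "(nat \<Rightarrow> nat) \<Rightarrow> nat" where
  "wdeg w = (\<Sum>i\<in>{i. w i \<noteq> 0}. 2^i * w i)"

definition wlt :: "(nat \<Rightarrow> nat) \<Rightarrow> (nat \<Rightarrow> nat) \<Rightarrow> bool" where
  "wlt v w \<longleftrightarrow> (\<exists>k. v k < w k \<and> (\<forall>i<k. v i = w i))"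

definition wle :: "(nat \<Rightarrow> nat) \<Rightarrow> (nat \<Rightarrow> nat) \<Rightarrow> bool" where
  "wle v w \<longleftrightarrow> v = w \<or> wlt v w"

definition lexlt :: "mono \<Rightarrow> mono \<Rightarrow> bool" where
  "lexlt x y \<longleftrightarrow> (\<exists>k<length x. x!k < y!k \<and> (\<forall>i<k. x!i = y!i))"

definition mless :: "mono \<Rightarrow> mono \<Rightarrow> bool" where
  "mless x y \<longleftrightarrow> wlt (weight x) (weight y) \<or> (weight x = weight y \<and> lexlt x y)"

definition inadmissible :: "mono \<Rightarrow> bool" where
  "inadmissible x \<longleftrightarrow> (\<exists>Y. finite Y \<and>
      (\<forall>y\<in>Y. length y = 5 \<and> sum_list y = sum_list x \<and> mless y x) \<and>
      padd {x} Y \<in> hit)"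

definition admissible :: "mono \<Rightarrow> bool" where
  "admissible x \<longleftrightarrow> length x = 5 \<and> \<not> inadmissible x"

definition w3 :: "nat \<Rightarrow> nat \<Rightarrow> nat" where
  "w3 d = (\<lambda>i. if i < d then 3 else 0)"

definition P5w :: "(nat \<Rightarrow> nat) \<Rightarrow> poly set" where
  "P5w w = {p. finite p \<and> (\<forall>y\<in>p. length y = 5 \<and> sum_list y = wdeg w \<and> wle (weight y) w)}"

definition P5minus_gens :: "(nat \<Rightarrow> nat) \<Rightarrow> poly set" where
  "P5minus_gens w = {{y} | y. length y = 5 \<and> sum_list y = wdeg w \<and> wlt (weight y) w}"

definition qdim :: "poly set \<Rightarrow> poly set \<Rightarrow> nat" where
  "qdim W U = (LEAST n. \<exists>S. finite S \<and> card S = n \<and> S \<subseteq> W \<and>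
       W \<subseteq> {padd s u | s u. s \<in> f2span S \<and> u \<in> U})"

definition QP5dim :: "(nat \<Rightarrow> nat) \<Rightarrow> nat" where
  "QP5dim w = qdim (P5w w) (P5w w \<inter> f2span (hitgens \<union> P5minus_gens w))"

definition Xab :: "nat \<Rightarrow> nat \<Rightarrow> mono" where
  "Xab \<alpha> \<beta> = map (\<lambda>l. if l = \<alpha> \<or> l = \<beta> then 0 else 1) [1..<6]"

end

theory Submission
  imports Defs
begin


lemma padd_mem: "x \<in> padd p q \<longleftrightarrow> (x \<in> p) \<noteq> (x \<in> q)"
  by (auto simp: padd_def)

lemma padd_empty[simp]: "padd {} q = q" "padd p {} = p"
  by (auto simp: padd_def)

lemma padd_assoc: "padd (padd p q) r = padd p (padd q r)"
  by (rule set_eqI) (simp add: padd_mem, blast)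

lemma padd_commute: "padd p q = padd q p"
  by (auto simp: padd_def)

lemma f2span_base: "s \<in> S \<Longrightarrow> s \<in> f2span S"
  using f2span.add[OF f2span.zero] by simp

lemma f2span_padd: "q \<in> f2span S \<Longrightarrow> p \<in> f2span S \<Longrightarrow> padd p q \<in> f2span S"
proof (induction q rule: f2span.induct)
  case zero then show ?case by simp
next
  case (add q s)
  have "padd (padd p q) s \<in> f2span S" by (rule f2span.add[OF add.IH[OF add.prems] add.hyps(2)])
  then show ?case by (simp add: padd_assoc)
qed

lemma f2span_mono: "p \<in> f2span S \<Longrightarrow> S \<subseteq> S' \<Longrightarrow> p \<in> f2span S'"
  by (induction p rule: f2span.induct) (auto intro: f2span.intros)

lemma f2span_fin: "finite A \<Longrightarrow> (\<forall>x\<in>A. {x} \<in> S) \<Longrightarrow> A \<in> f2span S"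
proof (induction A rule: finite_induct)
  case empty then show ?case by (simp add: f2span.zero)
next
  case (insert x F)
  have "insert x F = padd F {x}" using insert.hyps by (auto simp: padd_def)
  moreover have "padd F {x} \<in> f2span S" using insert by (intro f2span.add) auto
  ultimately show ?case by simp
qed

section \<open>Linear functionals given by parity of intersection\<close>

definition phi :: "poly \<Rightarrow> poly \<Rightarrow> bool" where
  "phi T p \<longleftrightarrow> odd (card (p \<inter> T))"

lemma card_symdiff:
  assumes "finite A" "finite B"
  shows "card ((A - B) \<union> (B - A)) + 2 * card (A \<inter> B) = card A + card B"
proof -
  have d: "card ((A - B) \<union> (B - A)) = card (A - B) + card (B - A)"
    using assms by (intro card_Un_disjoint) auto
  have a: "card (A - B) = card A - card (A \<inter> B)" using assms by (simp add: card_Diff_subset_Int)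
  have b: "card (B - A) = card B - card (A \<inter> B)" using assms
    by (simp add: card_Diff_subset_Int Int_commute)
  have "card (A \<inter> B) \<le> card A" "card (A \<inter> B) \<le> card B" using assms by (auto intro: card_mono)
  then show ?thesis using d a b by linarith
qed

lemma phi_padd: "finite T \<Longrightarrow> phi T (padd p q) = (phi T p \<noteq> phi T q)"
proof -
  assume T: "finite T"
  have e: "padd p q \<inter> T = ((p \<inter> T) - (q \<inter> T)) \<union> ((q \<inter> T) - (p \<inter> T))"
    by (auto simp: padd_def)
  have "card (padd p q \<inter> T) + 2 * card ((p \<inter> T) \<inter> (q \<inter> T)) = card (p \<inter> T) + card (q \<inter> T)"
    unfolding e using T by (intro card_symdiff) auto
  then show ?thesis unfolding phi_def by presburger
qed

lemma phi_span0: "p \<in> f2span S \<Longrightarrow> finite T \<Longrightarrow> (\<forall>s\<in>S. \<not> phi T s) \<Longrightarrow> \<not> phi T p"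
  by (induction p rule: f2span.induct) (auto simp: phi_padd, simp add: phi_def)

lemma phi_span: "finite T \<Longrightarrow> (\<forall>s\<in>S. \<not> phi T s) \<Longrightarrow> p \<in> f2span S \<Longrightarrow> \<not> phi T p"
  using phi_span0 by blast

definition gsum :: "poly set \<Rightarrow> poly" where
  "gsum A = {m. odd (card {s\<in>A. m \<in> s})}"

lemma span_gsum0: "p \<in> f2span S \<Longrightarrow> finite S \<Longrightarrow> \<exists>A\<subseteq>S. p = gsum A"
proof (induction p rule: f2span.induct)
  case zero then show ?case by (intro exI[of _ "{}"]) (auto simp: gsum_def)
next
  case (add p s)
  then obtain A where A: "A \<subseteq> S" "p = gsum A" by auto
  have fA: "finite A" using A add.prems finite_subset by blast
  define A' where "A' = (if s \<in> A then A - {s} else insert s A)"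
  have "padd p s = gsum A'"
  proof (rule set_eqI)
    fix m
    let ?C = "{s'\<in>A. m \<in> s'}"
    have fin: "finite ?C" using fA by auto
    have key: "odd (card {s'\<in>A'. m \<in> s'}) = (odd (card ?C) \<noteq> (m \<in> s))"
    proof (cases "m \<in> s")
      case ms: True
      show ?thesis
      proof (cases "s \<in> A")
        case True
        have e: "{s'\<in>A'. m \<in> s'} = ?C - {s}" using True unfolding A'_def by auto
        have "s \<in> ?C" using True ms by simp
        then have "card ?C \<ge> 1" "card (?C - {s}) = card ?C - 1" using fin
          by (simp_all add: Suc_le_eq card_gt_0_iff[symmetric]) (rule card_gt_0_iff[THEN iffD2], auto)
        then show ?thesis unfolding e using ms by presburger
      next
        case False
        have e: "{s'\<in>A'. m \<in> s'} = insert s ?C" using False ms unfolding A'_def by auto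
        have "s \<notin> ?C" using False by simp
        then have "card (insert s ?C) = Suc (card ?C)" using fin by simp
        then show ?thesis unfolding e using ms by simp
      qed
    next
      case ms: False
      have "{s'\<in>A'. m \<in> s'} = ?C" using ms unfolding A'_def by auto
      then show ?thesis using ms by simp
    qed
    show "m \<in> padd p s \<longleftrightarrow> m \<in> gsum A'"
      unfolding padd_mem A(2) gsum_def mem_Collect_eq key by simp
  qed
  moreover have "A' \<subseteq> S" using A add.hyps unfolding A'_def by auto
  ultimately show ?case by blast
qed

lemma span_gsum: "finite S \<Longrightarrow> p \<in> f2span S \<Longrightarrow> \<exists>A\<subseteq>S. p = gsum A"
  using span_gsum0 by blast

lemma card_span: assumes "finite S" shows "finite (f2span S) \<and> card (f2span S) \<le> 2 ^ card S"
proof -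
  have sub: "f2span S \<subseteq> gsum ` Pow S" using span_gsum[OF assms] by blast
  have f: "finite (gsum ` Pow S)" using assms by simp
  have "card (f2span S) \<le> card (gsum ` Pow S)" using sub f by (rule card_mono[rotated])
  also have "\<dots> \<le> card (Pow S)" by (rule card_image_le) (use assms in simp)
  also have "\<dots> = 2 ^ card S" using assms by (simp add: card_Pow)
  finally show ?thesis using sub f finite_subset by blast
qed

lemma qdim_le:
  "finite S \<Longrightarrow> S \<subseteq> W \<Longrightarrow> W \<subseteq> {padd s u | s u. s \<in> f2span S \<and> u \<in> U} \<Longrightarrow> qdim W U \<le> card S"
  unfolding qdim_def by (rule Least_le) blast

lemma qdim_ge:
  assumes ex: "finite S0" "S0 \<subseteq> W" "W \<subseteq> {padd s u | s u. s \<in> f2span S0 \<and> u \<in> U}"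
  and fin: "\<And>k. k < n \<Longrightarrow> finite (Ts k)"
  and van: "\<And>k u. k < n \<Longrightarrow> u \<in> U \<Longrightarrow> \<not> phi (Ts k) u"
  and inW: "\<And>K. K \<subseteq> {..<n} \<Longrightarrow> ms ` K \<in> W"
  and dual: "\<And>j k. j < n \<Longrightarrow> k < n \<Longrightarrow> ms j \<in> Ts k \<longleftrightarrow> j = k"
  shows "n \<le> qdim W U"
proof -
  let ?P = "\<lambda>m. \<exists>S. finite S \<and> card S = m \<and> S \<subseteq> W \<and> W \<subseteq> {padd s u | s u. s \<in> f2span S \<and> u \<in> U}"
  have "?P (card S0)" using ex by blast
  then have "?P (Least ?P)" by (rule LeastI)
  then obtain S where S: "finite S" "card S = qdim W U" "S \<subseteq> W"
    "W \<subseteq> {padd s u | s u. s \<in> f2span S \<and> u \<in> U}"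
    unfolding qdim_def by blast
  define \<pi> where "\<pi> p = {k. k < n \<and> phi (Ts k) p}" for p
  have piK: "\<pi> (ms ` K) = K" if K: "K \<subseteq> {..<n}" for K
  proof -
    have "ms ` K \<inter> Ts k = (if k \<in> K then {ms k} else {})" if k: "k < n" for k
      using dual K k by (auto simp: subset_iff)
    then show ?thesis unfolding \<pi>_def phi_def using K by (auto split: if_splits)
  qed
  have "Pow {..<n} \<subseteq> \<pi> ` f2span S"
  proof
    fix K assume "K \<in> Pow {..<n}"
    then have K: "K \<subseteq> {..<n}" by auto
    then have "ms ` K \<in> W" by (rule inW)
    then obtain s u where su: "ms ` K = padd s u" "s \<in> f2span S" "u \<in> U" using S(4) by blast
    have "\<pi> (padd s u) = \<pi> s" unfolding \<pi>_def using fin van su(3) by (auto simp: phi_padd)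
    then have "K = \<pi> s" using piK[OF K] su(1) by simp
    then show "K \<in> \<pi> ` f2span S" using su(2) by blast
  qed
  moreover have cs: "finite (f2span S)" "card (f2span S) \<le> 2 ^ card S" using card_span[OF S(1)] by auto
  ultimately have "card (Pow {..<n}) \<le> card (\<pi> ` f2span S)" by (intro card_mono) auto
  also have "\<dots> \<le> card (f2span S)" using cs by (intro card_image_le)
  finally have "2 ^ n \<le> card (f2span S)" by (simp add: card_Pow)
  then have "2 ^ n \<le> (2::nat) ^ card S" using cs by linarith
  then have "n \<le> card S" by (rule power_le_imp_le_exp[rotated]) simp
  then show ?thesis using S(2) by simp
qed



section \<open>Executable Steenrod squares\<close>

definition Qc :: "nat \<Rightarrow> nat \<Rightarrow> bool" where
  "Qc x y \<longleftrightarrow> x \<le> y \<and> odd (x choose (y - x))"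

lemma sq_alt: "sq k a = {b. list_all2 Qc a b \<and> sum_list b = sum_list a + k}"
  unfolding sq_def Qc_def list_all2_conv_all_nth by auto

lemma Qc_sum: "list_all2 Qc xs ys \<Longrightarrow> sum_list xs \<le> sum_list ys"
  by (induction xs ys rule: list_all2_induct) (auto simp: Qc_def)

fun sqL :: "nat \<Rightarrow> nat list \<Rightarrow> nat list list" where
  "sqL k [] = (if k = 0 then [[]] else [])"
| "sqL k (x#xs) = concat (map (\<lambda>j. map (Cons (x+j)) (sqL (k-j) xs))
      (filter (\<lambda>j. odd (x choose j)) [0..<Suc k]))"

lemma sqL_mem: "b \<in> set (sqL k a) \<longleftrightarrow> list_all2 Qc a b \<and> sum_list b = sum_list a + k"
proof (induction a arbitrary: k b)
  case Nil then show ?case by auto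
next
  case (Cons x xs)
  show ?case
  proof
    assume "b \<in> set (sqL k (x # xs))"
    then obtain j ys where j: "j < Suc k" "odd (x choose j)" "ys \<in> set (sqL (k - j) xs)" "b = (x+j) # ys"
      by (auto simp del: upt_Suc)
    moreover have "Qc x (x+j)" using j by (simp add: Qc_def)
    ultimately show "list_all2 Qc (x # xs) b \<and> sum_list b = sum_list (x # xs) + k"
      using Cons.IH[where k="k-j" and b=ys] by auto
  next
    assume H: "list_all2 Qc (x # xs) b \<and> sum_list b = sum_list (x # xs) + k"
    then obtain y ys where b: "b = y # ys" "Qc x y" "list_all2 Qc xs ys"
      by (auto simp: list_all2_Cons1)
    define j where "j = y - x"
    have xy: "x \<le> y" "odd (x choose j)" using b(2) unfolding Qc_def j_def by auto
    have s: "y + sum_list ys = x + sum_list xs + k" using H b by simp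
    moreover have "sum_list xs \<le> sum_list ys" using b(3) by (rule Qc_sum)
    ultimately have jk: "j \<le> k" "sum_list ys = sum_list xs + (k - j)" unfolding j_def using xy by auto
    have "ys \<in> set (sqL (k - j) xs)" using Cons.IH b(3) jk by auto
    moreover have "y = x + j" using xy j_def by simp
    ultimately have "j < Suc k \<and> odd (x choose j) \<and> b \<in> set (map (Cons (x+j)) (sqL (k - j) xs))"
      using jk xy b(1) by auto
    then show "b \<in> set (sqL k (x # xs))" by (simp del: upt_Suc) blast
  qed
qed

lemma sqL_set: "set (sqL k a) = sq k a"
  unfolding sq_alt using sqL_mem by auto

lemma finite_sq: "finite (sq k a)"
  using sqL_set[of k a] by (metis List.finite_set)

fun preL :: "nat list \<Rightarrow> nat list list" where
  "preL [] = [[]]"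
| "preL (y#ys) = concat (map (\<lambda>x. map (Cons x) (preL ys)) (filter (\<lambda>x. odd (x choose (y - x))) [0..<Suc y]))"

lemma preL_mem: "list_all2 Qc a b \<Longrightarrow> a \<in> set (preL b)"
proof (induction b arbitrary: a)
  case Nil then show ?case by simp
next
  case (Cons y ys)
  then obtain x xs where "a = x # xs" "Qc x y" "list_all2 Qc xs ys"
    by (auto simp: list_all2_Cons2)
  moreover have "xs \<in> set (preL ys)" using Cons.IH calculation by blast
  ultimately have "x < Suc y \<and> odd (x choose (y - x)) \<and> a \<in> set (map (Cons x) (preL ys))"
    by (auto simp: Qc_def)
  then show ?case by (simp del: upt_Suc) blast
qed

lemma preL_sq: "b \<in> sq k a \<Longrightarrow> a \<in> set (preL b)"
  unfolding sq_alt using preL_mem by auto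

fun monosB :: "nat \<Rightarrow> nat \<Rightarrow> nat \<Rightarrow> nat list list" where
  "monosB 0 d b = (if d = 0 then [[]] else [])"
| "monosB (Suc n) d b = concat (map (\<lambda>i. map (Cons i) (monosB n (d - i) b)) [0..<Suc (min d b)])"

lemma monosB_complete: "length y = n \<Longrightarrow> sum_list y = d \<Longrightarrow> (\<forall>e\<in>set y. e \<le> b) \<Longrightarrow> y \<in> set (monosB n d b)"
proof (induction n arbitrary: y d)
  case 0 then show ?case by simp
next
  case (Suc n)
  obtain e ys where y: "y = e # ys" using Suc.prems by (cases y) auto
  have "ys \<in> set (monosB n (d - e) b)" using Suc.prems y by (intro Suc.IH) auto
  moreover have "e < Suc (min d b)" using Suc.prems y by auto
  ultimately show ?case using y by (auto simp del: upt_Suc)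
qed

definition weightL :: "nat list \<Rightarrow> nat \<Rightarrow> nat" where
  "weightL a i = sum_list (map (\<lambda>x. x div 2^i mod 2) a)"

lemma weight_L: "weight a i = weightL a i"
  unfolding weight_def weightL_def sum_list_sum_nth by (simp add: atLeast0LessThan)

definition wts :: "nat \<Rightarrow> nat list \<Rightarrow> nat list" where
  "wts N a = map (weightL a) [0..<N]"

fun lexB :: "nat list \<Rightarrow> nat list \<Rightarrow> bool" where
  "lexB (x#xs) (y#ys) = (x < y \<or> (x = y \<and> lexB xs ys))"
| "lexB _ _ = False"

lemma lexB_lexlt: "length x = length y \<Longrightarrow> lexlt x y = lexB x y"
proof (induction x arbitrary: y)
  case Nil then show ?case by (simp add: lexlt_def)
next
  case (Cons a xs)
  then obtain b ys where y: "y = b # ys" "length xs = length ys" by (cases y) auto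
  have "lexlt (a # xs) (b # ys) \<longleftrightarrow> a < b \<or> (a = b \<and> lexlt xs ys)"
  proof
    assume "lexlt (a # xs) (b # ys)"
    then obtain k where k: "k < Suc (length xs)" "(a#xs)!k < (b#ys)!k" "\<forall>i<k. (a#xs)!i = (b#ys)!i"
      unfolding lexlt_def by auto
    show "a < b \<or> (a = b \<and> lexlt xs ys)"
    proof (cases k)
      case 0 then show ?thesis using k by simp
    next
      case (Suc k')
      have "a = b" using k(3) Suc by force
      moreover have "\<forall>i<k'. xs!i = ys!i"
      proof (intro allI impI)
        fix i assume "i < k'" then have "Suc i < k" using Suc by simp
        then show "xs!i = ys!i" using k(3) by force
      qed
      then have "lexlt xs ys" unfolding lexlt_def
        using k Suc by (intro exI[of _ k']) auto
      ultimately show ?thesis by simp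
    qed
  next
    assume "a < b \<or> (a = b \<and> lexlt xs ys)"
    then show "lexlt (a # xs) (b # ys)"
    proof
      assume "a < b" then show ?thesis unfolding lexlt_def by (intro exI[of _ 0]) auto
    next
      assume "a = b \<and> lexlt xs ys"
      then obtain k where k: "a = b" "k < length xs" "xs!k < ys!k" "\<forall>i<k. xs!i = ys!i"
        unfolding lexlt_def by auto
      show ?thesis unfolding lexlt_def
      proof (intro exI[of _ "Suc k"] conjI allI impI)
        fix i assume "i < Suc k" then show "(a#xs)!i = (b#ys)!i" using k by (cases i) auto
      qed (use k in auto)
    qed
  qed
  then show ?case using y Cons.IH by simp
qed

lemma weight_vanish: "(\<forall>e\<in>set a. e < 2^N) \<Longrightarrow> N \<le> i \<Longrightarrow> weight a i = 0"
proof -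
  assume a: "\<forall>e\<in>set a. e < 2^N" and i: "N \<le> i"
  have "2^N \<le> (2::nat)^i" using i by simp
  have "\<forall>j<length a. a!j div 2^i = 0"
  proof (intro allI impI)
    fix j assume "j < length a"
    then have "a!j < 2^N" using a nth_mem by blast
    then show "a!j div 2^i = 0" using \<open>2^N \<le> 2^i\<close> by (intro div_less) linarith
  qed
  then show ?thesis unfolding weight_def by simp
qed

lemma lexlt_map: "lexlt (map v [0..<N]) (map w [0..<N]) \<longleftrightarrow> (\<exists>k<N. v k < w k \<and> (\<forall>i<k. v i = w i))"
  unfolding lexlt_def by auto

lemma wlt_B: assumes "\<forall>i\<ge>N. v i = 0" "\<forall>i\<ge>N. w i = 0"
  shows "wlt v w \<longleftrightarrow> lexB (map v [0..<N]) (map w [0..<N])"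
proof -
  have "wlt v w \<longleftrightarrow> (\<exists>k<N. v k < w k \<and> (\<forall>i<k. v i = w i))"
    unfolding wlt_def using assms by (metis not_le not_less0)
  then show ?thesis using lexB_lexlt[of "map v [0..<N]" "map w [0..<N]"] lexlt_map by simp
qed

lemma weq_B: assumes "\<forall>i\<ge>N. v i = 0" "\<forall>i\<ge>N. w i = 0"
  shows "v = w \<longleftrightarrow> map v [0..<N] = map w [0..<N]"
proof
  assume "map v [0..<N] = map w [0..<N]"
  then have "\<forall>i<N. v i = w i" by (simp add: map_eq_conv)
  then show "v = w" using assms by (metis not_le ext)
qed simp

lemma map_weight: "map (weight a) [0..<N] = wts N a"
  unfolding wts_def by (simp add: weight_L[abs_def])

definition mlessB :: "nat \<Rightarrow> nat list \<Rightarrow> nat list \<Rightarrow> bool" where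
  "mlessB N x y \<longleftrightarrow> lexB (wts N x) (wts N y) \<or> (wts N x = wts N y \<and> lexB x y)"

lemma mless_B: assumes "length x = length y" "\<forall>e\<in>set x. e < 2^N" "\<forall>e\<in>set y. e < 2^N"
  shows "mless x y \<longleftrightarrow> mlessB N x y"
proof -
  have vx: "\<forall>i\<ge>N. weight x i = 0" and vy: "\<forall>i\<ge>N. weight y i = 0"
    using weight_vanish assms by auto
  show ?thesis unfolding mless_def mlessB_def
    using wlt_B[OF vx vy] weq_B[OF vx vy] lexB_lexlt[OF assms(1)] by (simp add: map_weight)
qed

lemma wlt_W: assumes "\<forall>e\<in>set x. e < 2^N" "\<forall>i\<ge>N. w i = 0"
  shows "wlt (weight x) w \<longleftrightarrow> lexB (wts N x) (map w [0..<N])"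
  using wlt_B[of N "weight x" w] weight_vanish[OF assms(1)] assms(2) by (simp add: map_weight)

lemma weq_W: assumes "\<forall>e\<in>set x. e < 2^N" "\<forall>i\<ge>N. w i = 0"
  shows "weight x = w \<longleftrightarrow> wts N x = map w [0..<N]"
  using weq_B[of N "weight x" w] weight_vanish[OF assms(1)] assms(2) by (simp add: map_weight)

lemma entries_small:
  assumes "\<forall>i\<ge>N. weight a i = 0" shows "\<forall>e\<in>set a. e < 2^N"
proof
  fix e assume e: "e \<in> set a"
  then obtain j where j: "j < length a" "a!j = e" by (auto simp: in_set_conv_nth)
  have nb: "\<not> bit e i" if "N \<le> i" for i
  proof -
    have "weight a i = 0" using assms that by simp
    then have "\<forall>j<length a. a!j div 2^i mod 2 = 0" unfolding weight_def by simp
    then have "e div 2^i mod 2 = 0" using j by auto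
    then show ?thesis by (simp add: bit_nat_def even_iff_mod_2_eq_zero)
  qed
  have "e = take_bit N e"
    by (rule bit_eqI) (metis bit_take_bit_iff nb not_less)
  then show "e < 2^N" by (metis take_bit_nat_less_exp)
qed

lemma sum_w4: "\<forall>e\<in>set a. e < 4 \<Longrightarrow> sum_list a = weightL a 0 + 2 * weightL a 1"
proof (induction a)
  case Nil then show ?case by (simp add: weightL_def)
next
  case (Cons e a)
  have "e = e mod 2 + 2 * (e div 2 mod 2)" using Cons.prems by auto
  then show ?case using Cons by (simp add: weightL_def)
qed

lemma sum_w2: "\<forall>e\<in>set a. e < 2 \<Longrightarrow> sum_list a = weightL a 0"
proof (induction a)
  case Nil then show ?case by (simp add: weightL_def)
next
  case (Cons e a)
  then show ?case by (simp add: weightL_def)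
qed



section \<open>Parity of binomial coefficients via Pascal rows\<close>

fun prow :: "nat \<Rightarrow> bool list" where
  "prow 0 = [True]"
| "prow (Suc n) = map2 (\<noteq>) (prow n @ [False]) (False # prow n)"

lemma prow_len: "length (prow n) = Suc n"
  by (induction n) auto

lemma prow_nth: "k \<le> n \<Longrightarrow> prow n ! k = odd (n choose k)"
proof (induction n arbitrary: k)
  case 0 then show ?case by simp
next
  case (Suc n)
  have l: "length (prow n) = Suc n" by (rule prow_len)
  have a: "(prow n @ [False]) ! k = odd (n choose k)"
  proof (cases "k \<le> n")
    case True then show ?thesis using Suc.IH l by (simp add: nth_append)
  next
    case False then have "k = Suc n" using Suc.prems by simp
    then show ?thesis using l by (simp add: nth_append binomial_eq_0)
  qed
  have b: "(False # prow n) ! k = (k \<noteq> 0 \<and> odd (n choose (k - 1)))"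
    using Suc.IH Suc.prems by (cases k) auto
  have "prow (Suc n) ! k = ((prow n @ [False]) ! k \<noteq> (False # prow n) ! k)"
    using l Suc.prems by simp
  also have "\<dots> = odd (Suc n choose k)"
    unfolding a b by (cases k) auto
  finally show ?case .
qed

lemma oddc: "odd (n choose k) \<longleftrightarrow> (k \<le> n \<and> prow n ! k)"
  using prow_nth[of k n] by (cases "k \<le> n") (auto simp: binomial_eq_0)

lemma prow_num: "prow (numeral m) = map2 (\<noteq>) (prow (pred_numeral m) @ [False]) (False # prow (pred_numeral m))"
  by (simp add: numeral_eq_Suc)

lemma prow_1: "prow 1 = [True, True]" by simp
lemma prow_2: "prow 2 = [True, False, True]" by (subst prow_num) (simp add: prow_1)
lemma prow_3: "prow 3 = [True, True, True, True]" by (subst prow_num) (simp add: prow_2)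
lemma prow_4: "prow 4 = [True, False, False, False, True]" by (subst prow_num) (simp add: prow_3)
lemma prow_5: "prow 5 = [True, True, False, False, True, True]" by (subst prow_num) (simp add: prow_4)
lemma prow_6: "prow 6 = [True, False, True, False, True, False, True]" by (subst prow_num) (simp add: prow_5)
lemma prow_7: "prow 7 = [True, True, True, True, True, True, True, True]" by (subst prow_num) (simp add: prow_6)
lemma prow_8: "prow 8 = [True, False, False, False, False, False, False, False, True]" by (subst prow_num) (simp add: prow_7)
lemma prow_9: "prow 9 = [True, True, False, False, False, False, False, False, True, True]" by (subst prow_num) (simp add: prow_8)
lemma prow_10: "prow 10 = [True, False, True, False, False, False, False, False, True, False, True]" by (subst prow_num) (simp add: prow_9)
lemma prow_11: "prow 11 = [True, True, True, True, False, False, False, False, True, True, True, True]" by (subst prow_num) (simp add: prow_10)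
lemma prow_12: "prow 12 = [True, False, False, False, True, False, False, False, True, False, False, False, True]" by (subst prow_num) (simp add: prow_11)
lemma prow_13: "prow 13 = [True, True, False, False, True, True, False, False, True, True, False, False, True, True]" by (subst prow_num) (simp add: prow_12)
lemma prow_14: "prow 14 = [True, False, True, False, True, False, True, False, True, False, True, False, True, False, True]" by (subst prow_num) (simp add: prow_13)
lemma prow_15: "prow 15 = [True, True, True, True, True, True, True, True, True, True, True, True, True, True, True, True]" by (subst prow_num) (simp add: prow_14)

lemmas prow_rows = prow.simps(1) prow_1 prow_2 prow_3 prow_4 prow_5 prow_6 prow_7 prow_8 prow_9 prow_10 prow_11 prow_12 prow_13 prow_14 prow_15


lemma hit_vanish_list:
  assumes dT: "distinct T"
  and sT: "\<forall>b\<in>set T. sum_list b = D"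
  and chk: "\<forall>a\<in>set (concat (map preL T)). sum_list a < D \<longrightarrow> even (length (filter (\<lambda>b. list_all2 Qc a b) T))"
  shows "\<forall>s\<in>hitgens. \<not> phi (set T) s"
proof
  fix s assume "s \<in> hitgens"
  then obtain i a where s: "s = sq i a" "0 < i" "length a = 5" by (auto simp: hitgens_def)
  show "\<not> phi (set T) s"
  proof (cases "sq i a \<inter> set T = {}")
    case True then show ?thesis using s by (simp add: phi_def)
  next
    case False
    then obtain b where b: "b \<in> sq i a" "b \<in> set T" by auto
    have sb: "sum_list b = D" using sT b by auto
    have "sum_list b = sum_list a + i" using b(1) by (simp add: sq_def)
    then have sa: "sum_list a < D" "i = D - sum_list a" using sb s(2) by auto
    have "a \<in> set (preL b)" using b(1) by (rule preL_sq)
    then have "a \<in> set (concat (map preL T))" using b(2) by auto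
    then have ev: "even (length (filter (\<lambda>b. list_all2 Qc a b) T))" using chk sa by auto
    have "sq i a \<inter> set T = set (filter (\<lambda>b. list_all2 Qc a b) T)"
      using sT sa by (auto simp: sq_alt)
    moreover have "card (set (filter (\<lambda>b. list_all2 Qc a b) T)) = length (filter (\<lambda>b. list_all2 Qc a b) T)"
      using dT by (intro distinct_card) simp
    ultimately show ?thesis using ev s(1) by (simp add: phi_def)
  qed
qed

section \<open>Triangular lower bound for qdim\<close>

lemma qdim_ge_tri:
  assumes ex: "finite S0" "S0 \<subseteq> W" "W \<subseteq> {padd s u | s u. s \<in> f2span S0 \<and> u \<in> U}"
  and fin: "\<And>k. k < n \<Longrightarrow> finite (Ts k)"
  and van: "\<And>k u. k < n \<Longrightarrow> u \<in> U \<Longrightarrow> \<not> phi (Ts k) u"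
  and inW: "\<And>K. K \<subseteq> {..<n} \<Longrightarrow> ms ` K \<in> W"
  and inj: "inj_on ms {..<n}"
  and diag: "\<And>k. k < n \<Longrightarrow> ms k \<in> Ts k"
  and tri: "\<And>j k. j < n \<Longrightarrow> k < n \<Longrightarrow> ms j \<in> Ts k \<Longrightarrow> k \<le> j"
  shows "n \<le> qdim W U"
proof -
  let ?P = "\<lambda>m. \<exists>S. finite S \<and> card S = m \<and> S \<subseteq> W \<and> W \<subseteq> {padd s u | s u. s \<in> f2span S \<and> u \<in> U}"
  have "?P (card S0)" using ex by blast
  then have "?P (Least ?P)" by (rule LeastI)
  then obtain S where S: "finite S" "card S = qdim W U" "S \<subseteq> W"
    "W \<subseteq> {padd s u | s u. s \<in> f2span S \<and> u \<in> U}"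
    unfolding qdim_def by blast
  define \<pi> where "\<pi> p = {k. k < n \<and> phi (Ts k) p}" for p
  define \<rho> where "\<rho> K = \<pi> (ms ` K)" for K
  have cnt: "card (ms ` K \<inter> Ts k) = card {j\<in>K. ms j \<in> Ts k}" if K: "K \<subseteq> {..<n}" for K k
  proof -
    have "ms ` K \<inter> Ts k = ms ` {j\<in>K. ms j \<in> Ts k}" by auto
    moreover have "inj_on ms {j\<in>K. ms j \<in> Ts k}" using K by (intro inj_on_subset[OF inj]) auto
    ultimately show ?thesis by (simp add: card_image)
  qed
  have rinj: "inj_on \<rho> (Pow {..<n})"
  proof (rule inj_onI, rule ccontr)
    fix K K' assume K: "K \<in> Pow {..<n}" and K': "K' \<in> Pow {..<n}" and eq: "\<rho> K = \<rho> K'" and ne: "K \<noteq> K'"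
    define D where "D = (K - K') \<union> (K' - K)"
    have Dne: "D \<noteq> {}" using ne unfolding D_def by blast
    have Dfin: "finite D" using K K' unfolding D_def by (auto intro: finite_subset[of _ "{..<n}"])
    define j0 where "j0 = Max D"
    have j0D: "j0 \<in> D" unfolding j0_def using Max_in[OF Dfin Dne] .
    have j0max: "\<And>j. j \<in> D \<Longrightarrow> j \<le> j0" unfolding j0_def using Dfin by simp
    have j0n: "j0 < n" using j0D K K' unfolding D_def by auto
    have split: "{j\<in>L. ms j \<in> Ts j0} = (if j0 \<in> L then {j0} else {}) \<union> {j\<in>L. j0 < j \<and> ms j \<in> Ts j0}"
      if L: "L \<subseteq> {..<n}" for L
    proof -
      have "\<And>j. j \<in> L \<Longrightarrow> ms j \<in> Ts j0 \<Longrightarrow> j = j0 \<or> j0 < j"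
      proof -
        fix j assume "j \<in> L" "ms j \<in> Ts j0"
        then have "j0 \<le> j" using tri L j0n by blast
        then show "j = j0 \<or> j0 < j" by auto
      qed
      then show ?thesis using diag[OF j0n] by (auto split: if_splits)
    qed
    have same: "{j\<in>K. j0 < j \<and> ms j \<in> Ts j0} = {j\<in>K'. j0 < j \<and> ms j \<in> Ts j0}"
      using j0max unfolding D_def by force
    have finK: "finite {j\<in>L. j0 < j \<and> ms j \<in> Ts j0}" if "L \<subseteq> {..<n}" for L
      by (rule finite_subset[of _ "{..<n}"]) (use that in auto)
    have c1: "card {j\<in>L. ms j \<in> Ts j0} = (if j0 \<in> L then 1 else 0) + card {j\<in>L. j0 < j \<and> ms j \<in> Ts j0}"
      if L: "L \<subseteq> {..<n}" for L
      unfolding split[OF L] using finK[OF L] by (auto simp: card_insert_if)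
    have "phi (Ts j0) (ms ` K) = phi (Ts j0) (ms ` K')"
      using eq j0n unfolding \<rho>_def \<pi>_def by blast
    then have "odd (card {j\<in>K. ms j \<in> Ts j0}) = odd (card {j\<in>K'. ms j \<in> Ts j0})"
      unfolding phi_def using cnt K K' by simp
    then have "odd ((if j0 \<in> K then 1 else 0) + card {j\<in>K. j0 < j \<and> ms j \<in> Ts j0}) =
               odd ((if j0 \<in> K' then 1 else 0) + card {j\<in>K. j0 < j \<and> ms j \<in> Ts j0})"
      using c1 K K' same by simp
    moreover have "(j0 \<in> K) \<noteq> (j0 \<in> K')" using j0D unfolding D_def by blast
    ultimately show False by (auto split: if_splits)
  qed
  have "\<rho> ` Pow {..<n} \<subseteq> \<pi> ` f2span S"
  proof
    fix X assume "X \<in> \<rho> ` Pow {..<n}"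
    then obtain K where K: "K \<subseteq> {..<n}" "X = \<pi> (ms ` K)" unfolding \<rho>_def by blast
    then have "ms ` K \<in> W" by (intro inW)
    then obtain s u where su: "ms ` K = padd s u" "s \<in> f2span S" "u \<in> U" using S(4) by blast
    have "\<pi> (padd s u) = \<pi> s" unfolding \<pi>_def using fin van su(3) by (auto simp: phi_padd)
    then show "X \<in> \<pi> ` f2span S" using su K by simp
  qed
  moreover have cs: "finite (f2span S)" "card (f2span S) \<le> 2 ^ card S" using card_span[OF S(1)] by auto
  ultimately have "card (\<rho> ` Pow {..<n}) \<le> card (\<pi> ` f2span S)" by (intro card_mono) auto
  also have "\<dots> \<le> card (f2span S)" using cs by (intro card_image_le)
  finally have "card (Pow {..<n::nat}) \<le> card (f2span S)" using rinj by (simp add: card_image)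
  then have "2 ^ n \<le> card (f2span S)" by (simp add: card_Pow)
  then have "2 ^ n \<le> (2::nat) ^ card S" using cs by linarith
  then have "n \<le> card S" by (rule power_le_imp_le_exp[rotated]) simp
  then show ?thesis using S(2) by simp
qed

section \<open>Admissibility and inadmissibility criteria\<close>

lemma adm_thm:
  assumes T: "finite T" and hv: "\<forall>s\<in>hitgens. \<not> phi T s" and xT: "x \<in> T"
    and nl: "\<forall>t\<in>T. \<not> mless t x" and lx: "length x = 5"
  shows "admissible x"
  unfolding admissible_def inadmissible_def
proof (intro conjI notI)
  show "length x = 5" by fact
next
  assume "\<exists>Y. finite Y \<and> (\<forall>y\<in>Y. length y = 5 \<and> sum_list y = sum_list x \<and> mless y x) \<and> padd {x} Y \<in> hit"
  then obtain Y where Y: "\<forall>y\<in>Y. mless y x" "padd {x} Y \<in> hit" by blast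
  have "\<not> phi T (padd {x} Y)" using phi_span[OF T hv] Y(2) unfolding hit_def by blast
  moreover have "Y \<inter> T = {}" using Y(1) nl by blast
  then have "\<not> phi T Y" by (simp add: phi_def)
  moreover have "phi T {x}" using xT by (simp add: phi_def)
  ultimately show False by (simp add: phi_padd[OF T])
qed

lemma inadm_thm:
  assumes "0 < i" "length a = 5" "x \<in> sq i a"
    "\<forall>y\<in>sq i a. y \<noteq> x \<longrightarrow> length y = 5 \<and> sum_list y = sum_list x \<and> mless y x"
  shows "inadmissible x"
proof -
  have "padd {x} (sq i a - {x}) = sq i a" using assms(3) by (auto simp: padd_def)
  moreover have "sq i a \<in> hit" unfolding hit_def hitgens_def using assms by (intro f2span_base) blast
  ultimately show ?thesis unfolding inadmissible_def using assms(4) finite_sq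
    by (intro exI[of _ "sq i a - {x}"]) auto
qed

section \<open>Dimension criterion\<close>

lemma P5w_padd: "p \<in> P5w w \<Longrightarrow> q \<in> P5w w \<Longrightarrow> padd p q \<in> P5w w"
  by (auto simp: P5w_def padd_def)

lemma padd_swap: "padd (padd s1 u1) (padd s2 u2) = padd (padd s1 s2) (padd u1 u2)"
  by (rule set_eqI) (simp add: padd_mem, blast)

lemma dimthm:
  assumes fin: "\<forall>k<n. finite (Ts k)"
  and low: "\<forall>k<n. \<forall>m\<in>Ts k. \<not> wlt (weight m) w"
  and hv: "\<forall>k<n. \<forall>s\<in>hitgens. \<not> phi (Ts k) s"
  and diag: "\<forall>k<n. ADM!k \<in> Ts k"
  and tri: "\<forall>j<n. \<forall>k<n. ADM!j \<in> Ts k \<longrightarrow> k \<le> j"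
  and adm: "\<forall>m\<in>set ADM. length m = 5 \<and> sum_list m = wdeg w \<and> weight m = w"
  and dist: "distinct ADM" and lenA: "length ADM = n"
  and cover: "\<forall>y. length y = 5 \<and> sum_list y = wdeg w \<and> weight y = w \<longrightarrow> y \<in> set ADM \<or>
      (\<exists>i a. 0 < i \<and> length a = 5 \<and> y \<in> sq i a \<and> y \<notin> set ADM \<and>
          (\<forall>z\<in>sq i a. length z = 5 \<and> sum_list z = wdeg w \<and> (z = y \<or> z \<in> set ADM \<or> wlt (weight z) w)))"
  shows "QP5dim w = n"
proof -
  define W where "W = P5w w"
  define U where "U = P5w w \<inter> f2span (hitgens \<union> P5minus_gens w)"
  define S0 where "S0 = (\<lambda>m. {m}) ` set ADM"
  have fS0: "finite S0" unfolding S0_def by simp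
  have cS0: "card S0 = n" unfolding S0_def using dist lenA
    by (simp add: card_image inj_on_def distinct_card)
  have S0W: "S0 \<subseteq> W" unfolding S0_def W_def P5w_def wle_def using adm by auto
  define R where "R = {padd s u | s u. s \<in> f2span S0 \<and> u \<in> U}"
  have U0: "{} \<in> U" unfolding U_def P5w_def by (auto intro: f2span.zero)
  have R0: "{} \<in> R" unfolding R_def using U0 f2span.zero by force
  have Radd: "padd p q \<in> R" if pq: "p \<in> R" "q \<in> R" for p q
  proof -
    obtain s1 u1 s2 u2 where su: "p = padd s1 u1" "q = padd s2 u2" "s1 \<in> f2span S0" "s2 \<in> f2span S0"
      "u1 \<in> U" "u2 \<in> U" using pq unfolding R_def by blast
    have "padd p q = padd (padd s1 s2) (padd u1 u2)" unfolding su(1,2) by (rule padd_swap)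
    moreover have "padd s1 s2 \<in> f2span S0" using su by (intro f2span_padd)
    moreover have "padd u1 u2 \<in> U" using su unfolding U_def by (auto intro: P5w_padd f2span_padd)
    ultimately show ?thesis unfolding R_def by blast
  qed
  have Rsing: "{y} \<in> R" if y: "length y = 5" "sum_list y = wdeg w" "wle (weight y) w" for y
  proof (cases "wlt (weight y) w")
    case True
    have "{y} \<in> P5minus_gens w" unfolding P5minus_gens_def using y True by auto
    then have "{y} \<in> f2span (hitgens \<union> P5minus_gens w)" by (intro f2span_base) auto
    moreover have "{y} \<in> P5w w" unfolding P5w_def using y by auto
    ultimately have "{y} \<in> U" unfolding U_def by simp
    then show ?thesis unfolding R_def using f2span.zero by force
  next
    case False
    then have wy: "weight y = w" using y(3) unfolding wle_def by auto
    from cover y(1,2) wy consider (A) "y \<in> set ADM"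
      | (C) i a where "0 < i" "length a = 5" "y \<in> sq i a" "y \<notin> set ADM"
        "\<forall>z\<in>sq i a. length z = 5 \<and> sum_list z = wdeg w \<and> (z = y \<or> z \<in> set ADM \<or> wlt (weight z) w)"
      by blast
    then show ?thesis
    proof cases
      case A
      then have "{y} \<in> f2span S0" unfolding S0_def by (intro f2span_base) auto
      then show ?thesis unfolding R_def using U0 by force
    next
      case C
      define A' where "A' = sq i a \<inter> set ADM"
      define B' where "B' = sq i a - {y} - set ADM"
      define u where "u = padd B' (sq i a)"
      have eq: "{y} = padd A' u" unfolding u_def A'_def B'_def using C(3,4)
        by (intro set_eqI) (auto simp: padd_mem)
      have sA: "A' \<in> f2span S0" unfolding A'_def S0_def by (intro f2span_fin) auto
      have "B' \<in> f2span (hitgens \<union> P5minus_gens w)" unfolding B'_def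
      proof (intro f2span_fin)
        show "finite (sq i a - {y} - set ADM)" using finite_sq by auto
        show "\<forall>z\<in>sq i a - {y} - set ADM. {z} \<in> hitgens \<union> P5minus_gens w"
          using C(5) unfolding P5minus_gens_def by blast
      qed
      moreover have "sq i a \<in> f2span (hitgens \<union> P5minus_gens w)"
        using C(1,2) unfolding hitgens_def by (intro f2span_base) blast
      ultimately have u1: "u \<in> f2span (hitgens \<union> P5minus_gens w)" unfolding u_def by (intro f2span_padd)
      have usub: "u \<subseteq> sq i a" unfolding u_def B'_def padd_def by auto
      have "finite u" using usub by (rule finite_subset) (rule finite_sq)
      moreover have "\<forall>z\<in>u. length z = 5 \<and> sum_list z = wdeg w \<and> wle (weight z) w"
      proof
        fix z assume "z \<in> u"
        then have z: "z \<in> sq i a" using usub by blast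
        then have z1: "length z = 5 \<and> sum_list z = wdeg w" using C(5) by blast
        have "z = y \<or> z \<in> set ADM \<or> wlt (weight z) w" using C(5) z by blast
        then have "wle (weight z) w"
        proof (elim disjE)
          assume "z \<in> set ADM" then show ?thesis using adm by (simp add: wle_def)
        qed (auto simp: wle_def wy)
        then show "length z = 5 \<and> sum_list z = wdeg w \<and> wle (weight z) w" using z1 by blast
      qed
      ultimately have "u \<in> P5w w" unfolding P5w_def by blast
      then have "u \<in> U" using u1 unfolding U_def by simp
      then show ?thesis unfolding R_def using eq sA by blast
    qed
  qed
  have WR: "W \<subseteq> R"
  proof
    fix p assume "p \<in> W"
    then have fp: "finite p" and pp: "\<forall>y\<in>p. length y = 5 \<and> sum_list y = wdeg w \<and> wle (weight y) w"
      unfolding W_def P5w_def by auto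
    have "F \<subseteq> p \<Longrightarrow> F \<in> R" if "finite F" for F
      using that
    proof (induction F rule: finite_induct)
      case empty then show ?case using R0 by simp
    next
      case (insert x F)
      have "insert x F = padd F {x}" using insert.hyps by (auto simp: padd_def)
      moreover have "F \<in> R" using insert by auto
      moreover have "{x} \<in> R" using pp insert.prems by (intro Rsing) auto
      ultimately show ?case using Radd by simp
    qed
    then show "p \<in> R" using fp by blast
  qed
  have le: "qdim W U \<le> n" using qdim_le[OF fS0 S0W] WR cS0 unfolding R_def by simp
  have ge: "n \<le> qdim W U"
  proof (rule qdim_ge_tri[OF fS0 S0W, where Ts = "Ts" and ms = "\<lambda>j. ADM ! j"])
    show "W \<subseteq> {padd s u |s u. s \<in> f2span S0 \<and> u \<in> U}" using WR unfolding R_def .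
    show "finite (Ts k)" if "k < n" for k using fin that by blast
    show "\<not> phi (Ts k) u" if k: "k < n" and u: "u \<in> U" for k u
    proof -
      have "\<forall>s\<in>hitgens \<union> P5minus_gens w. \<not> phi (Ts k) s"
      proof
        fix s assume "s \<in> hitgens \<union> P5minus_gens w"
        then show "\<not> phi (Ts k) s"
        proof
          assume "s \<in> hitgens" then show ?thesis using hv k by blast
        next
          assume "s \<in> P5minus_gens w"
          then obtain y where y: "s = {y}" "wlt (weight y) w" unfolding P5minus_gens_def by blast
          have "y \<notin> Ts k" using low k y(2) by blast
          then show ?thesis using y(1) by (simp add: phi_def)
        qed
      qed
      moreover have "u \<in> f2span (hitgens \<union> P5minus_gens w)" using u unfolding U_def by simp
      ultimately show ?thesis using phi_span fin k by blast
    qed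
    show "(\<lambda>j. ADM ! j) ` K \<in> W" if K: "K \<subseteq> {..<n}" for K
    proof -
      have sub: "(\<lambda>j. ADM ! j) ` K \<subseteq> set ADM" using K lenA by auto
      then have "finite ((\<lambda>j. ADM ! j) ` K)" by (rule finite_subset) simp
      then show ?thesis unfolding W_def P5w_def wle_def using sub adm by blast
    qed
    show "inj_on (\<lambda>j. ADM ! j) {..<n}" using dist lenA by (simp add: inj_on_def nth_eq_iff_index_eq)
    show "ADM ! k \<in> Ts k" if "k < n" for k using diag that by blast
    show "k \<le> j" if "j < n" "k < n" "ADM ! j \<in> Ts k" for j k using tri that by blast
  qed
  show ?thesis using le ge unfolding QP5dim_def W_def U_def by simp
qed



lemma lexB_trans: "lexB x y \<Longrightarrow> lexB y z \<Longrightarrow> lexB x z"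
proof (induction x arbitrary: y z)
  case Nil then show ?case by simp
next
  case (Cons a xs)
  then obtain b ys where y: "y = b # ys" by (cases y) auto
  with Cons.prems obtain c zs where z: "z = c # zs" by (cases z) auto
  show ?case using Cons y z by auto
qed

lemma lexB_irrefl: "\<not> lexB x x"
  by (induction x) auto

fun chainB :: "nat list list \<Rightarrow> bool" where
  "chainB (x # y # zs) = (lexB x y \<and> chainB (y # zs))"
| "chainB _ = True"

lemma chainB_sorted: "chainB xs \<Longrightarrow> sorted_wrt lexB xs"
proof (induction xs rule: chainB.induct)
  case (1 x y zs)
  then have h: "lexB x y" "sorted_wrt lexB (y # zs)" by auto
  then have "\<forall>z\<in>set zs. lexB x z" using lexB_trans by auto
  then show ?case using h by auto
qed auto

lemma sorted_distinct: "sorted_wrt lexB xs \<Longrightarrow> distinct xs"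
  by (induction xs) (auto simp: lexB_irrefl)

fun mergeL :: "nat list list \<Rightarrow> nat list list \<Rightarrow> nat list list" where
  "mergeL [] ys = ys"
| "mergeL xs [] = xs"
| "mergeL (x # xs) (y # ys) = (if lexB x y then x # mergeL xs (y # ys) else y # mergeL (x # xs) ys)"

lemma set_mergeL: "set (mergeL xs ys) = set xs \<union> set ys"
  by (induction xs ys rule: mergeL.induct) auto

definition sqStep :: "nat \<Rightarrow> nat \<Rightarrow> nat list \<Rightarrow> nat \<Rightarrow> nat list list" where
  "sqStep k x xs j = map (Cons (x+j)) (sqL (k-j) xs)"

lemma sqL_eval: "sqL k (x#xs) = concat (map (sqStep k x xs) (filter (\<lambda>j. odd (x choose j)) [0..<Suc k]))"
  unfolding sqStep_def by simp

definition monoStep :: "nat \<Rightarrow> nat \<Rightarrow> nat \<Rightarrow> nat \<Rightarrow> nat list list" where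
  "monoStep n d b i = map (Cons i) (monosB n (d - i) b)"

lemma monosB_num: "monosB (numeral m) d b = concat (map (monoStep (pred_numeral m) d b) [0..<Suc (min d b)])"
  unfolding monoStep_def by (simp add: numeral_eq_Suc)

lemma monosB_1: "monosB 1 d b = concat (map (monoStep 0 d b) [0..<Suc (min d b)])"
  unfolding monoStep_def by simp

lemma monosB_eval: "monosB (Suc n) d b = concat (map (monoStep n d b) [0..<Suc (min d b)])"
  unfolding monoStep_def by simp

definition chk_hit :: "(nat list \<times> nat list list) list \<Rightarrow> nat \<Rightarrow> bool" where
  "chk_hit FL D = list_all (\<lambda>(x,T). list_all (\<lambda>a. sum_list a < D \<longrightarrow> even (length (filter (\<lambda>b. list_all2 Qc a b) T))) (concat (map preL T))) FL"

definition chk_fl :: "(nat list \<times> nat list list) list \<Rightarrow> nat \<Rightarrow> nat list \<Rightarrow> bool" where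
  "chk_fl FL D WL = list_all (\<lambda>(x,T). distinct T \<and> T \<noteq> [] \<and> hd T = x \<and> wts 4 x = WL \<and>
     list_all (\<lambda>b. length b = 5 \<and> sum_list b = D \<and> list_all (\<lambda>e. e < 16) b \<and> \<not> lexB (wts 4 b) WL \<and>
        (if lexB b x then wts 4 b \<noteq> WL else True)) T) FL"

definition chk_cert :: "(nat list \<times> nat \<times> nat list) list \<Rightarrow> nat list list \<Rightarrow> nat \<Rightarrow> nat list \<Rightarrow> bool" where
  "chk_cert CERT ADML D WL = list_all (\<lambda>(x,i,a). 0 < i \<and> length a = 5 \<and> wts 4 x = WL \<and> x \<in> set (sqL i a) \<and>
     list_all (\<lambda>y. length y = 5 \<and> sum_list y = D \<and> list_all (\<lambda>e. e < 16) y \<and>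
        (y = x \<or> (if lexB (wts 4 y) WL then True else (y \<in> set ADML \<and> lexB y x)))) (sqL i a)) CERT"

definition chk_enum :: "nat list list \<Rightarrow> nat list list \<Rightarrow> nat \<Rightarrow> nat \<Rightarrow> nat list \<Rightarrow> bool" where
  "chk_enum ADML HL D NB WL = (filter (\<lambda>y. wts NB y = take NB WL) (monosB 5 D (2^NB - 1)) = mergeL ADML HL)"

lemma inst_thm:
  assumes hit: "chk_hit FL D" and fl: "chk_fl FL D WL" and srt: "chainB (map fst FL)"
  and cert: "chk_cert CERT ADML D WL" and en: "chk_enum ADML HL D NB WL"
  and aF: "map fst FL = ADML" and hC: "map fst CERT = HL"
  and wWL: "map w [0..<4] = WL" and w0: "\<forall>i\<ge>NB. w i = 0" and NB: "NB \<le> 4" and wd: "wdeg w = D"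
  shows "QP5dim w = length FL"
    and "\<forall>x\<in>set (map fst FL). admissible x \<and> weight x = w \<and> length x = 5 \<and> sum_list x = D"
    and "\<forall>x. admissible x \<and> weight x = w \<and> sum_list x = D \<longrightarrow> x \<in> set (map fst FL)"
proof -
  define n where "n = length FL"
  define ADM where "ADM = map fst FL"
  define Ts where "Ts k = set (snd (FL ! k))" for k
  have w4: "\<forall>i\<ge>4. w i = 0" using w0 NB by auto
  have flk: "distinct (snd (FL!k)) \<and> snd (FL!k) \<noteq> [] \<and> hd (snd (FL!k)) = ADM!k \<and> wts 4 (ADM!k) = WL \<and>
     (\<forall>b\<in>set (snd (FL!k)). length b = 5 \<and> sum_list b = D \<and> (\<forall>e\<in>set b. e < 16) \<and> \<not> lexB (wts 4 b) WL \<and>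
        (lexB b (ADM!k) \<longrightarrow> wts 4 b \<noteq> WL))" if k: "k < n" for k
  proof -
    obtain x T where xT: "FL ! k = (x, T)" by force
    have mem: "(x, T) \<in> set FL" using k xT unfolding n_def by (metis nth_mem)
    have P: "distinct T \<and> T \<noteq> [] \<and> hd T = x \<and> wts 4 x = WL \<and>
     (\<forall>b\<in>set T. length b = 5 \<and> sum_list b = D \<and> (\<forall>e\<in>set b. e < 16) \<and> \<not> lexB (wts 4 b) WL \<and>
        (if lexB b x then wts 4 b \<noteq> WL else True))"
      using bspec[OF fl[unfolded chk_fl_def list_all_iff] mem] by (simp add: list_all_iff)
    have ax: "ADM ! k = x" using xT k unfolding ADM_def n_def by simp
    show ?thesis unfolding ax xT snd_conv using P by (metis (full_types))
  qed
  have lenA: "length ADM = n" unfolding ADM_def n_def by simp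
  have sorted: "sorted_wrt lexB ADM" using srt chainB_sorted unfolding ADM_def by blast
  have dist: "distinct ADM" using sorted by (rule sorted_distinct)
  have e16: "\<forall>e\<in>set (ADM!k). e < 16" "length (ADM!k) = 5" "sum_list (ADM!k) = D" "ADM!k \<in> Ts k"
    if k: "k < n" for k
  proof -
    have "ADM!k \<in> set (snd (FL!k))" using flk[OF k] by (metis list.set_sel(1))
    then show "\<forall>e\<in>set (ADM!k). e < 16" "length (ADM!k) = 5" "sum_list (ADM!k) = D" "ADM!k \<in> Ts k"
      using flk[OF k] unfolding Ts_def by auto
  qed
  have wADM: "weight (ADM!k) = w" if k: "k < n" for k
    using weq_W[of "ADM!k" 4 w] e16[OF k] flk[OF k] w4 wWL by simp
  have admset: "\<forall>m\<in>set ADM. length m = 5 \<and> sum_list m = D \<and> weight m = w"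
  proof
    fix m assume "m \<in> set ADM"
    then obtain k where "k < n" "m = ADM!k" using lenA by (metis in_set_conv_nth)
    then show "length m = 5 \<and> sum_list m = D \<and> weight m = w" using e16 wADM by blast
  qed
  have fin: "\<forall>k<n. finite (Ts k)" unfolding Ts_def by simp
  have low: "\<forall>k<n. \<forall>m\<in>Ts k. \<not> wlt (weight m) w"
  proof (intro allI impI ballI)
    fix k m assume k: "k < n" and m: "m \<in> Ts k"
    then have "\<forall>e\<in>set m. e < 16" "\<not> lexB (wts 4 m) WL" using flk[OF k] unfolding Ts_def by auto
    then show "\<not> wlt (weight m) w" using wlt_W[of m 4 w] w4 wWL by simp
  qed
  have hv: "\<forall>k<n. \<forall>s\<in>hitgens. \<not> phi (Ts k) s"
  proof (intro allI impI)
    fix k assume k: "k < n"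
    obtain x T where xT: "FL ! k = (x, T)" by force
    have "(x, T) \<in> set FL" using k xT unfolding n_def by (metis nth_mem)
    then have c: "\<forall>a\<in>set (concat (map preL T)). sum_list a < D \<longrightarrow> even (length (filter (\<lambda>b. list_all2 Qc a b) T))"
      using hit unfolding chk_hit_def list_all_iff by auto
    have "distinct T" "\<forall>b\<in>set T. sum_list b = D" using flk[OF k] xT by auto
    from hit_vanish_list[OF this c] show "\<forall>s\<in>hitgens. \<not> phi (Ts k) s" unfolding Ts_def xT by simp
  qed
  have diag: "\<forall>k<n. ADM!k \<in> Ts k" using e16 by blast
  have tri: "\<forall>j<n. \<forall>k<n. ADM!j \<in> Ts k \<longrightarrow> k \<le> j"
  proof (intro allI impI)
    fix j k assume j: "j < n" and k: "k < n" and jk: "ADM!j \<in> Ts k"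
    show "k \<le> j"
    proof (rule ccontr)
      assume "\<not> k \<le> j"
      then have "j < k" by simp
      then have "lexB (ADM!j) (ADM!k)" using sorted k lenA by (simp add: sorted_wrt_iff_nth_less)
      then have "wts 4 (ADM!j) \<noteq> WL" using flk[OF k] jk unfolding Ts_def by blast
      then show False using flk[OF j] by simp
    qed
  qed
  have classify: "y \<in> set ADM \<or> (\<exists>i a. (y, i, a) \<in> set CERT)"
    if y: "length y = 5" "sum_list y = D" "weight y = w" for y
  proof -
    have "\<forall>i\<ge>NB. weight y i = 0" using y(3) w0 by simp
    then have "\<forall>e\<in>set y. e < 2^NB" by (rule entries_small)
    then have "\<forall>e\<in>set y. e \<le> 2^NB - 1" by fastforce
    then have "y \<in> set (monosB 5 D (2^NB - 1))" using y by (intro monosB_complete) auto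
    moreover have "wts NB y = take NB WL"
    proof -
      have "wts NB y = map (weight y) [0..<NB]" by (simp add: map_weight)
      also have "\<dots> = map w [0..<NB]" using y(3) by simp
      also have "\<dots> = take NB (map w [0..<4])" using NB by (simp add: take_map min_def)
      finally show ?thesis using wWL by simp
    qed
    ultimately have "y \<in> set (filter (\<lambda>y. wts NB y = take NB WL) (monosB 5 D (2^NB - 1)))" by simp
    then have "y \<in> set (mergeL (map fst FL) (map fst CERT))"
      using en aF hC unfolding chk_enum_def by metis
    then show ?thesis unfolding set_mergeL ADM_def by force
  qed
  have certp: "0 < i \<and> length a = 5 \<and> wts 4 y = WL \<and> y \<in> sq i a \<and>
      (\<forall>z\<in>sq i a. length z = 5 \<and> sum_list z = D \<and> (\<forall>e\<in>set z. e < 16) \<and>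
        (z = y \<or> lexB (wts 4 z) WL \<or> (z \<in> set ADM \<and> lexB z y)))"
    if mem: "(y, i, a) \<in> set CERT" for y i a
  proof -
    have P: "0 < i \<and> length a = 5 \<and> wts 4 y = WL \<and> y \<in> set (sqL i a) \<and>
     (\<forall>z\<in>set (sqL i a). length z = 5 \<and> sum_list z = D \<and> (\<forall>e\<in>set z. e < 16) \<and>
        (z = y \<or> (if lexB (wts 4 z) WL then True else (z \<in> set (map fst FL) \<and> lexB z y))))"
      using bspec[OF cert[unfolded chk_cert_def list_all_iff aF[symmetric]] mem] by (simp add: list_all_iff)
    have "\<forall>z\<in>sq i a. length z = 5 \<and> sum_list z = D \<and> (\<forall>e\<in>set z. e < 16) \<and>
        (z = y \<or> lexB (wts 4 z) WL \<or> (z \<in> set ADM \<and> lexB z y))"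
    proof
      fix z assume "z \<in> sq i a"
      then have "z \<in> set (sqL i a)" by (simp add: sqL_set)
      then have "length z = 5 \<and> sum_list z = D \<and> (\<forall>e\<in>set z. e < 16) \<and>
        (z = y \<or> (if lexB (wts 4 z) WL then True else (z \<in> set (map fst FL) \<and> lexB z y)))"
        using P by blast
      then show "length z = 5 \<and> sum_list z = D \<and> (\<forall>e\<in>set z. e < 16) \<and>
        (z = y \<or> lexB (wts 4 z) WL \<or> (z \<in> set ADM \<and> lexB z y))"
        unfolding ADM_def by (cases "lexB (wts 4 z) WL") simp_all
    qed
    then show ?thesis using P by (simp add: sqL_set)
  qed
  have wtsA: "wts 4 z = WL" if "z \<in> set ADM" for z
  proof -
    from that obtain k where k: "k < length ADM" "ADM!k = z" by (auto simp: in_set_conv_nth)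
    then have "k < n" using lenA by simp
    then show ?thesis using flk[of k] k(2) by simp
  qed
  have mlessC: "mless z y" if "(y, i, a) \<in> set CERT" "z \<in> sq i a" "z \<noteq> y" for y i a z
  proof -
    have c: "0 < i \<and> length a = 5 \<and> wts 4 y = WL \<and> y \<in> sq i a" and
      zc: "length z = 5 \<and> sum_list z = D \<and> (\<forall>e\<in>set z. e < 16) \<and> (z = y \<or> lexB (wts 4 z) WL \<or> (z \<in> set ADM \<and> lexB z y))"
      using certp[OF that(1)] that(2) by auto
    have yc: "length y = 5 \<and> (\<forall>e\<in>set y. e < 16)" using certp[OF that(1)] c by blast
    have "z \<in> set ADM \<Longrightarrow> wts 4 z = WL" by (rule wtsA)
    then have "mlessB 4 z y" using zc c that(3) unfolding mlessB_def by auto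
    then show ?thesis using mless_B[of z y 4] zc yc by simp
  qed
  have cover: "\<forall>y. length y = 5 \<and> sum_list y = wdeg w \<and> weight y = w \<longrightarrow> y \<in> set ADM \<or>
      (\<exists>i a. 0 < i \<and> length a = 5 \<and> y \<in> sq i a \<and> y \<notin> set ADM \<and>
          (\<forall>z\<in>sq i a. length z = 5 \<and> sum_list z = wdeg w \<and> (z = y \<or> z \<in> set ADM \<or> wlt (weight z) w)))"
  proof (intro allI impI)
    fix y assume y: "length y = 5 \<and> sum_list y = wdeg w \<and> weight y = w"
    show "y \<in> set ADM \<or> (\<exists>i a. 0 < i \<and> length a = 5 \<and> y \<in> sq i a \<and> y \<notin> set ADM \<and>
          (\<forall>z\<in>sq i a. length z = 5 \<and> sum_list z = wdeg w \<and> (z = y \<or> z \<in> set ADM \<or> wlt (weight z) w)))"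
    proof (cases "y \<in> set ADM")
      case False
      have "sum_list y = D" using y wd by simp
      then obtain i a where ia: "(y, i, a) \<in> set CERT" using classify[of y] y False by blast
      have "\<forall>z\<in>sq i a. length z = 5 \<and> sum_list z = wdeg w \<and> (z = y \<or> z \<in> set ADM \<or> wlt (weight z) w)"
      proof
        fix z assume z: "z \<in> sq i a"
        have cz: "\<forall>z\<in>sq i a. length z = 5 \<and> sum_list z = D \<and> (\<forall>e\<in>set z. e < 16) \<and>
          (z = y \<or> lexB (wts 4 z) WL \<or> (z \<in> set ADM \<and> lexB z y))" using certp[OF ia] by (rule conjunct2[THEN conjunct2, THEN conjunct2, THEN conjunct2])
        have zc: "length z = 5 \<and> sum_list z = D \<and> (\<forall>e\<in>set z. e < 16) \<and> (z = y \<or> lexB (wts 4 z) WL \<or> z \<in> set ADM)"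
          using bspec[OF cz z] by blast
        then have "lexB (wts 4 z) WL \<Longrightarrow> wlt (weight z) w" using wlt_W[of z 4 w] w4 wWL by simp
        then show "length z = 5 \<and> sum_list z = wdeg w \<and> (z = y \<or> z \<in> set ADM \<or> wlt (weight z) w)"
          using zc wd by auto
      qed
      moreover have "0 < i" "length a = 5" "y \<in> sq i a" using certp[OF ia] by auto
      ultimately show ?thesis using False by blast
    qed simp
  qed
  have adm': "\<forall>m\<in>set ADM. length m = 5 \<and> sum_list m = wdeg w \<and> weight m = w" using admset wd by simp
  show "QP5dim w = length FL"
    unfolding n_def[symmetric] by (rule dimthm[OF fin low hv diag tri adm' dist lenA cover])
  have admk: "admissible (ADM!k)" if k: "k < n" for k
  proof (rule adm_thm[where T = "Ts k"])
    show "finite (Ts k)" unfolding Ts_def by simp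
    show "\<forall>s\<in>hitgens. \<not> phi (Ts k) s" using hv k by blast
    show "ADM!k \<in> Ts k" using diag k by blast
    show "length (ADM!k) = 5" using e16[OF k] by blast
    show "\<forall>t\<in>Ts k. \<not> mless t (ADM!k)"
    proof
      fix t assume t: "t \<in> Ts k"
      then have tc: "length t = 5 \<and> (\<forall>e\<in>set t. e < 16) \<and> \<not> lexB (wts 4 t) WL \<and> (lexB t (ADM!k) \<longrightarrow> wts 4 t \<noteq> WL)"
        using flk[OF k] unfolding Ts_def by blast
      then have "\<not> mlessB 4 t (ADM!k)" using flk[OF k] unfolding mlessB_def by auto
      then show "\<not> mless t (ADM!k)" using mless_B[of t "ADM!k" 4] tc e16[OF k] by simp
    qed
  qed
  show "\<forall>x\<in>set (map fst FL). admissible x \<and> weight x = w \<and> length x = 5 \<and> sum_list x = D"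
    unfolding ADM_def[symmetric]
  proof
    fix x assume "x \<in> set ADM"
    then obtain k where k: "k < length ADM" "ADM!k = x" by (auto simp: in_set_conv_nth)
    then have "k < n" using lenA by simp
    then show "admissible x \<and> weight x = w \<and> length x = 5 \<and> sum_list x = D"
      using admk[of k] admset \<open>x \<in> set ADM\<close> k(2) by auto
  qed
  show "\<forall>x. admissible x \<and> weight x = w \<and> sum_list x = D \<longrightarrow> x \<in> set (map fst FL)"
  proof (intro allI impI)
    fix x assume x: "admissible x \<and> weight x = w \<and> sum_list x = D"
    then have lx: "length x = 5" unfolding admissible_def by blast
    show "x \<in> set (map fst FL)"
    proof (rule ccontr)
      assume nx: "x \<notin> set (map fst FL)"
      then obtain i a where ia: "(x, i, a) \<in> set CERT" using classify lx x unfolding ADM_def by blast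
      have "inadmissible x"
      proof (rule inadm_thm[where i = i and a = a])
        show "0 < i" "length a = 5" "x \<in> sq i a" using certp[OF ia] by auto
        show "\<forall>y\<in>sq i a. y \<noteq> x \<longrightarrow> length y = 5 \<and> sum_list y = sum_list x \<and> mless y x"
          using certp[OF ia] mlessC[OF ia] x by auto
      qed
      then show False using x unfolding admissible_def by blast
    qed
  qed
qed


definition FL2 :: "(nat list \<times> nat list list) list" where "FL2 = [([0,0,3,3,3],[[0,0,3,3,3]]),
 ([0,1,2,3,3],[[0,1,2,3,3],[0,2,1,3,3]]),
 ([0,1,3,2,3],[[0,1,3,2,3],[0,2,3,1,3]]),
 ([0,1,3,3,2],[[0,1,3,3,2],[0,2,3,3,1]]),
 ([0,3,0,3,3],[[0,3,0,3,3]]),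
 ([0,3,1,2,3],[[0,3,1,2,3],[0,3,2,1,3]]),
 ([0,3,1,3,2],[[0,3,1,3,2],[0,3,2,3,1]]),
 ([0,3,3,0,3],[[0,3,3,0,3]]),
 ([0,3,3,1,2],[[0,3,3,1,2],[0,3,3,2,1]]),
 ([0,3,3,3,0],[[0,3,3,3,0]]),
 ([1,0,2,3,3],[[1,0,2,3,3],[2,0,1,3,3]]),
 ([1,0,3,2,3],[[1,0,3,2,3],[2,0,3,1,3]]),
 ([1,0,3,3,2],[[1,0,3,3,2],[2,0,3,3,1]]),
 ([1,1,2,2,3],[[1,1,2,2,3],[2,1,1,2,3],[2,1,2,1,3],[1,1,1,1,5]]),
 ([1,1,2,3,2],[[1,1,2,3,2],[2,1,1,3,2],[2,1,2,3,1],[1,1,1,5,1]]),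
 ([1,1,3,2,2],[[1,1,3,2,2],[2,1,3,1,2],[2,1,3,2,1],[1,1,5,1,1]]),
 ([1,2,0,3,3],[[1,2,0,3,3],[2,1,0,3,3]]),
 ([1,2,1,2,3],[[1,2,1,2,3],[2,1,1,2,3],[2,2,1,1,3],[1,1,1,1,5]]),
 ([1,2,1,3,2],[[1,2,1,3,2],[2,1,1,3,2],[2,2,1,3,1],[1,1,1,5,1]]),
 ([1,2,2,1,3],[[1,2,2,1,3],[2,1,2,1,3],[2,2,1,1,3],[1,1,1,1,5]]),
 ([1,2,2,3,1],[[1,2,2,3,1],[2,1,2,3,1],[2,2,1,3,1],[1,1,1,5,1]]),
 ([1,2,3,0,3],[[1,2,3,0,3],[2,1,3,0,3]]),
 ([1,2,3,1,2],[[1,2,3,1,2],[2,1,3,1,2],[2,2,3,1,1],[1,1,5,1,1]]),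
 ([1,2,3,2,1],[[1,2,3,2,1],[2,1,3,2,1],[2,2,3,1,1],[1,1,5,1,1]]),
 ([1,2,3,3,0],[[1,2,3,3,0],[2,1,3,3,0]]),
 ([1,3,0,2,3],[[1,3,0,2,3],[2,3,0,1,3]]),
 ([1,3,0,3,2],[[1,3,0,3,2],[2,3,0,3,1]]),
 ([1,3,1,2,2],[[1,3,1,2,2],[2,3,1,1,2],[2,3,1,2,1],[1,5,1,1,1]]),
 ([1,3,2,0,3],[[1,3,2,0,3],[2,3,1,0,3]]),
 ([1,3,2,1,2],[[1,3,2,1,2],[2,3,1,1,2],[2,3,2,1,1],[1,5,1,1,1]]),
 ([1,3,2,2,1],[[1,3,2,2,1],[2,3,1,2,1],[2,3,2,1,1],[1,5,1,1,1]]),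
 ([1,3,2,3,0],[[1,3,2,3,0],[2,3,1,3,0]]),
 ([1,3,3,0,2],[[1,3,3,0,2],[2,3,3,0,1]]),
 ([1,3,3,2,0],[[1,3,3,2,0],[2,3,3,1,0]]),
 ([3,0,0,3,3],[[3,0,0,3,3]]),
 ([3,0,1,2,3],[[3,0,1,2,3],[3,0,2,1,3]]),
 ([3,0,1,3,2],[[3,0,1,3,2],[3,0,2,3,1]]),
 ([3,0,3,0,3],[[3,0,3,0,3]]),
 ([3,0,3,1,2],[[3,0,3,1,2],[3,0,3,2,1]]),
 ([3,0,3,3,0],[[3,0,3,3,0]]),
 ([3,1,0,2,3],[[3,1,0,2,3],[3,2,0,1,3]]),
 ([3,1,0,3,2],[[3,1,0,3,2],[3,2,0,3,1]]),
 ([3,1,1,2,2],[[3,1,1,2,2],[3,2,1,1,2],[3,2,1,2,1],[5,1,1,1,1]]),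
 ([3,1,2,0,3],[[3,1,2,0,3],[3,2,1,0,3]]),
 ([3,1,2,1,2],[[3,1,2,1,2],[3,2,1,1,2],[3,2,2,1,1],[5,1,1,1,1]]),
 ([3,1,2,2,1],[[3,1,2,2,1],[3,2,1,2,1],[3,2,2,1,1],[5,1,1,1,1]]),
 ([3,1,2,3,0],[[3,1,2,3,0],[3,2,1,3,0]]),
 ([3,1,3,0,2],[[3,1,3,0,2],[3,2,3,0,1]]),
 ([3,1,3,2,0],[[3,1,3,2,0],[3,2,3,1,0]]),
 ([3,3,0,0,3],[[3,3,0,0,3]]),
 ([3,3,0,1,2],[[3,3,0,1,2],[3,3,0,2,1]]),
 ([3,3,0,3,0],[[3,3,0,3,0]]),
 ([3,3,1,0,2],[[3,3,1,0,2],[3,3,2,0,1]]),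
 ([3,3,1,2,0],[[3,3,1,2,0],[3,3,2,1,0]]),
 ([3,3,3,0,0],[[3,3,3,0,0]])]"

definition CERT2 :: "(nat list \<times> nat \<times> nat list) list" where "CERT2 = [([0,2,1,3,3],1,[0,1,1,3,3]),
 ([0,2,3,1,3],1,[0,1,3,1,3]),
 ([0,2,3,3,1],1,[0,1,3,3,1]),
 ([0,3,2,1,3],1,[0,3,1,1,3]),
 ([0,3,2,3,1],1,[0,3,1,3,1]),
 ([0,3,3,2,1],1,[0,3,3,1,1]),
 ([2,0,1,3,3],1,[1,0,1,3,3]),
 ([2,0,3,1,3],1,[1,0,3,1,3]),
 ([2,0,3,3,1],1,[1,0,3,3,1]),
 ([2,1,0,3,3],1,[1,1,0,3,3]),
 ([2,1,1,2,3],1,[1,1,1,2,3]),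
 ([2,1,1,3,2],1,[1,1,1,3,2]),
 ([2,1,2,1,3],1,[1,1,2,1,3]),
 ([2,1,2,3,1],1,[1,1,2,3,1]),
 ([2,1,3,0,3],1,[1,1,3,0,3]),
 ([2,1,3,1,2],1,[1,1,3,1,2]),
 ([2,1,3,2,1],1,[1,1,3,2,1]),
 ([2,1,3,3,0],1,[1,1,3,3,0]),
 ([2,2,1,1,3],1,[1,2,1,1,3]),
 ([2,2,1,3,1],1,[1,2,1,3,1]),
 ([2,2,3,1,1],1,[1,2,3,1,1]),
 ([2,3,0,1,3],1,[1,3,0,1,3]),
 ([2,3,0,3,1],1,[1,3,0,3,1]),
 ([2,3,1,0,3],1,[1,3,1,0,3]),
 ([2,3,1,1,2],1,[1,3,1,1,2]),
 ([2,3,1,2,1],1,[1,3,1,2,1]),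
 ([2,3,1,3,0],1,[1,3,1,3,0]),
 ([2,3,2,1,1],1,[1,3,2,1,1]),
 ([2,3,3,0,1],1,[1,3,3,0,1]),
 ([2,3,3,1,0],1,[1,3,3,1,0]),
 ([3,0,2,1,3],1,[3,0,1,1,3]),
 ([3,0,2,3,1],1,[3,0,1,3,1]),
 ([3,0,3,2,1],1,[3,0,3,1,1]),
 ([3,2,0,1,3],1,[3,1,0,1,3]),
 ([3,2,0,3,1],1,[3,1,0,3,1]),
 ([3,2,1,0,3],1,[3,1,1,0,3]),
 ([3,2,1,1,2],1,[3,1,1,1,2]),
 ([3,2,1,2,1],1,[3,1,1,2,1]),
 ([3,2,1,3,0],1,[3,1,1,3,0]),
 ([3,2,2,1,1],1,[3,1,2,1,1]),
 ([3,2,3,0,1],1,[3,1,3,0,1]),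
 ([3,2,3,1,0],1,[3,1,3,1,0]),
 ([3,3,0,2,1],1,[3,3,0,1,1]),
 ([3,3,2,0,1],1,[3,3,1,0,1]),
 ([3,3,2,1,0],1,[3,3,1,1,0])]"

definition POS15 :: "nat list list" where "POS15 = [[1,1,2,2,3],[1,1,2,3,2],[1,1,3,2,2],[1,2,1,2,3],[1,2,1,3,2],[1,2,2,1,3],[1,2,2,3,1],[1,2,3,1,2],[1,2,3,2,1],[1,3,1,2,2],[1,3,2,1,2],[1,3,2,2,1],[3,1,1,2,2],[3,1,2,1,2],[3,1,2,2,1]]"

definition FL1 :: "(nat list \<times> nat list list) list" where "FL1 = [([0,0,1,1,1],[[0,0,1,1,1]]),([0,1,0,1,1],[[0,1,0,1,1]]),([0,1,1,0,1],[[0,1,1,0,1]]),([0,1,1,1,0],[[0,1,1,1,0]]),([1,0,0,1,1],[[1,0,0,1,1]]),([1,0,1,0,1],[[1,0,1,0,1]]),([1,0,1,1,0],[[1,0,1,1,0]]),([1,1,0,0,1],[[1,1,0,0,1]]),([1,1,0,1,0],[[1,1,0,1,0]]),([1,1,1,0,0],[[1,1,1,0,0]])]"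

definition ADM2L :: "nat list list" where "ADM2L = [[0,0,3,3,3],[0,1,2,3,3],[0,1,3,2,3],[0,1,3,3,2],[0,3,0,3,3],[0,3,1,2,3],[0,3,1,3,2],[0,3,3,0,3],[0,3,3,1,2],[0,3,3,3,0],[1,0,2,3,3],[1,0,3,2,3],[1,0,3,3,2],[1,1,2,2,3],[1,1,2,3,2],[1,1,3,2,2],[1,2,0,3,3],[1,2,1,2,3],[1,2,1,3,2],[1,2,2,1,3],[1,2,2,3,1],[1,2,3,0,3],[1,2,3,1,2],[1,2,3,2,1],[1,2,3,3,0],[1,3,0,2,3],[1,3,0,3,2],[1,3,1,2,2],[1,3,2,0,3],[1,3,2,1,2],[1,3,2,2,1],[1,3,2,3,0],[1,3,3,0,2],[1,3,3,2,0],[3,0,0,3,3],[3,0,1,2,3],[3,0,1,3,2],[3,0,3,0,3],[3,0,3,1,2],[3,0,3,3,0],[3,1,0,2,3],[3,1,0,3,2],[3,1,1,2,2],[3,1,2,0,3],[3,1,2,1,2],[3,1,2,2,1],[3,1,2,3,0],[3,1,3,0,2],[3,1,3,2,0],[3,3,0,0,3],[3,3,0,1,2],[3,3,0,3,0],[3,3,1,0,2],[3,3,1,2,0],[3,3,3,0,0]]"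

definition HL2 :: "nat list list" where "HL2 = [[0,2,1,3,3],[0,2,3,1,3],[0,2,3,3,1],[0,3,2,1,3],[0,3,2,3,1],[0,3,3,2,1],[2,0,1,3,3],[2,0,3,1,3],[2,0,3,3,1],[2,1,0,3,3],[2,1,1,2,3],[2,1,1,3,2],[2,1,2,1,3],[2,1,2,3,1],[2,1,3,0,3],[2,1,3,1,2],[2,1,3,2,1],[2,1,3,3,0],[2,2,1,1,3],[2,2,1,3,1],[2,2,3,1,1],[2,3,0,1,3],[2,3,0,3,1],[2,3,1,0,3],[2,3,1,1,2],[2,3,1,2,1],[2,3,1,3,0],[2,3,2,1,1],[2,3,3,0,1],[2,3,3,1,0],[3,0,2,1,3],[3,0,2,3,1],[3,0,3,2,1],[3,2,0,1,3],[3,2,0,3,1],[3,2,1,0,3],[3,2,1,1,2],[3,2,1,2,1],[3,2,1,3,0],[3,2,2,1,1],[3,2,3,0,1],[3,2,3,1,0],[3,3,0,2,1],[3,3,2,0,1],[3,3,2,1,0]]"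

definition ADM1L :: "nat list list" where "ADM1L = [[0,0,1,1,1],[0,1,0,1,1],[0,1,1,0,1],[0,1,1,1,0],[1,0,0,1,1],[1,0,1,0,1],[1,0,1,1,0],[1,1,0,0,1],[1,1,0,1,0],[1,1,1,0,0]]"

definition CERT1 :: "(nat list \<times> nat \<times> nat list) list" where "CERT1 = []"

lemma upt_rec': "[i..<j] = (if i < j then i # [i + 1..<j] else [])" by (simp add: upt_rec)

lemmas evs = Qc_def oddc prow_rows upt_rec' wts_def weightL_def sqL_eval sqStep_def
  monosB_eval monosB_num monosB_1 monoStep_def

declare sqL.simps(2)[simp del] monosB.simps(2)[simp del]

lemma c2_hit: "chk_hit FL2 9" by (simp add: chk_hit_def FL2_def evs)
lemma c2_fl: "chk_fl FL2 9 [3,3,0,0]" by (simp add: chk_fl_def FL2_def evs)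
lemma c2_map: "map fst FL2 = ADM2L" by (simp add: FL2_def ADM2L_def)
lemma c2_hmap: "map fst CERT2 = HL2" by (simp add: CERT2_def HL2_def)
lemma c2_chain: "chainB (map fst FL2)" unfolding c2_map by (simp add: ADM2L_def)
lemma c2_cert: "chk_cert CERT2 ADM2L 9 [3,3,0,0]" by (simp add: chk_cert_def CERT2_def ADM2L_def evs)
lemma c2_enum: "chk_enum ADM2L HL2 9 2 [3,3,0,0]" by (simp add: chk_enum_def HL2_def ADM2L_def evs)
lemma c2_len: "length FL2 = 55" by (simp add: FL2_def)
lemma c2_pos: "filter (\<lambda>y. list_all (\<lambda>e. 0 < e) y) ADM2L = POS15" by (simp add: ADM2L_def POS15_def)

lemma c1_hit: "chk_hit FL1 3" by (simp add: chk_hit_def FL1_def evs)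
lemma c1_fl: "chk_fl FL1 3 [3,0,0,0]" by (simp add: chk_fl_def FL1_def evs)
lemma c1_map: "map fst FL1 = ADM1L" by (simp add: FL1_def ADM1L_def)
lemma c1_hmap: "map fst CERT1 = []" by (simp add: CERT1_def)
lemma c1_chain: "chainB (map fst FL1)" unfolding c1_map by (simp add: ADM1L_def)
lemma c1_cert: "chk_cert CERT1 ADM1L 3 [3,0,0,0]" by (simp add: chk_cert_def CERT1_def)
lemma c1_enum: "chk_enum ADM1L [] 3 1 [3,0,0,0]" by (simp add: chk_enum_def ADM1L_def evs)
lemma c1_len: "length FL1 = 10" by (simp add: FL1_def)

lemma w3_1_map: "map (w3 1) [0..<4] = [3,0,0,0]" by (simp add: w3_def upt_rec')
lemma w3_2_map: "map (w3 2) [0..<4] = [3,3,0,0]" by (simp add: w3_def upt_rec')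
lemma w3_1_0: "\<forall>i\<ge>1. w3 1 i = 0" by (simp add: w3_def)
lemma w3_2_0: "\<forall>i\<ge>2. w3 2 i = 0" by (simp add: w3_def)

lemma wdeg_w3_1: "wdeg (w3 1) = 3"
proof -
  have "{i. w3 1 i \<noteq> 0} = {0}" by (auto simp: w3_def)
  then show ?thesis by (simp add: wdeg_def w3_def)
qed

lemma wdeg_w3_2: "wdeg (w3 2) = 9"
proof -
  have "{i. w3 2 i \<noteq> 0} = {0, 1}" by (auto simp: w3_def)
  then show ?thesis by (simp add: wdeg_def w3_def)
qed

lemma NB2: "(2::nat) \<le> 4" by simp
lemma NB1: "(1::nat) \<le> 4" by simp
lemmas inst2 = inst_thm[OF c2_hit c2_fl c2_chain c2_cert c2_enum c2_map c2_hmap w3_2_map w3_2_0 NB2 wdeg_w3_2]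
lemmas inst1 = inst_thm[OF c1_hit c1_fl c1_chain c1_cert c1_enum c1_map c1_hmap w3_1_map w3_1_0 NB1 wdeg_w3_1]

lemma Xab_set: "{Xab a b | a b. 1 \<le> a \<and> a < b \<and> b \<le> 5} = set ADM1L"
proof -
  have e: "set ADM1L = set [Xab 1 2, Xab 1 3, Xab 1 4, Xab 1 5, Xab 2 3, Xab 2 4, Xab 2 5, Xab 3 4, Xab 3 5, Xab 4 5]"
    by (simp add: ADM1L_def Xab_def upt_rec')
  have "{Xab a b | a b. 1 \<le> a \<and> a < b \<and> b \<le> 5} = set [Xab 1 2, Xab 1 3, Xab 1 4, Xab 1 5, Xab 2 3, Xab 2 4, Xab 2 5, Xab 3 4, Xab 3 5, Xab 4 5]"
  proof (intro set_eqI iffI)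
    fix x assume "x \<in> {Xab a b | a b. 1 \<le> a \<and> a < b \<and> b \<le> 5}"
    then obtain a b where x: "x = Xab a b" "1 \<le> a" "a < b" "b \<le> 5" by blast
    then have "a \<in> {1,2,3,4}" "b \<in> {2,3,4,5}" by auto
    then show "x \<in> set [Xab 1 2, Xab 1 3, Xab 1 4, Xab 1 5, Xab 2 3, Xab 2 4, Xab 2 5, Xab 3 4, Xab 3 5, Xab 4 5]"
      using x by auto
  next
    fix x assume "x \<in> set [Xab 1 2, Xab 1 3, Xab 1 4, Xab 1 5, Xab 2 3, Xab 2 4, Xab 2 5, Xab 3 4, Xab 3 5, Xab 4 5]"
    then show "x \<in> {Xab a b | a b. 1 \<le> a \<and> a < b \<and> b \<le> 5}" by force
  qed
  then show ?thesis using e by simp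
qed

theorem proposition4:
  shows "{x. admissible x \<and> weight x = w3 1} = {Xab a b | a b. 1 \<le> a \<and> a < b \<and> b \<le> 5}
       \<and> QP5dim (w3 1) = 10
       \<and> {x. admissible x \<and> weight x = w3 2 \<and> (\<forall>j<5. 0 < x!j)} =
           {[1,1,2,2,3], [1,1,2,3,2], [1,1,3,2,2], [1,2,1,2,3], [1,2,1,3,2],
            [1,2,2,1,3], [1,2,2,3,1], [1,2,3,1,2], [1,2,3,2,1], [1,3,1,2,2],
            [1,3,2,1,2], [1,3,2,2,1], [3,1,1,2,2], [3,1,2,1,2], [3,1,2,2,1]}
       \<and> QP5dim (w3 2) = 55"
proof (intro conjI)
  show "QP5dim (w3 1) = 10" using inst1(1) c1_len by simp
  show "QP5dim (w3 2) = 55" using inst2(1) c2_len by simp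
  show "{x. admissible x \<and> weight x = w3 1} = {Xab a b | a b. 1 \<le> a \<and> a < b \<and> b \<le> 5}"
    unfolding Xab_set
  proof (intro set_eqI iffI)
    fix x assume "x \<in> {x. admissible x \<and> weight x = w3 1}"
    then have x: "admissible x" "weight x = w3 1" by auto
    have "\<forall>i\<ge>1. weight x i = 0" using x(2) w3_1_0 by simp
    then have "\<forall>e\<in>set x. e < 2^1" by (rule entries_small)
    then have "sum_list x = weightL x 0" using sum_w2 by simp
    also have "\<dots> = 3" using x(2) by (simp add: weight_L[symmetric] w3_def)
    finally have "x \<in> set (map fst FL1)" using inst1(3) x by blast
    then show "x \<in> set ADM1L" unfolding c1_map .
  next
    fix x assume "x \<in> set ADM1L"
    then have "x \<in> set (map fst FL1)" unfolding c1_map .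
    then show "x \<in> {x. admissible x \<and> weight x = w3 1}" using inst1(2) by blast
  qed
  show "{x. admissible x \<and> weight x = w3 2 \<and> (\<forall>j<5. 0 < x!j)} =
           {[1,1,2,2,3], [1,1,2,3,2], [1,1,3,2,2], [1,2,1,2,3], [1,2,1,3,2],
            [1,2,2,1,3], [1,2,2,3,1], [1,2,3,1,2], [1,2,3,2,1], [1,3,1,2,2],
            [1,3,2,1,2], [1,3,2,2,1], [3,1,1,2,2], [3,1,2,1,2], [3,1,2,2,1]}"
  proof -
    have pset: "{[1,1,2,2,3], [1,1,2,3,2], [1,1,3,2,2], [1,2,1,2,3], [1,2,1,3,2],
            [1,2,2,1,3], [1,2,2,3,1], [1,2,3,1,2], [1,2,3,2,1], [1,3,1,2,2],
            [1,3,2,1,2], [1,3,2,2,1], [3,1,1,2,2], [3,1,2,1,2], [3,1,2,2,1]} = set POS15"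
      by (simp add: POS15_def)
    have pos: "(\<forall>j<5. 0 < x!j) \<longleftrightarrow> list_all (\<lambda>e. 0 < e) x" if "length x = 5" for x :: "nat list"
      using that by (simp add: list_all_length)
    show ?thesis unfolding pset
    proof (intro set_eqI iffI)
      fix x assume "x \<in> {x. admissible x \<and> weight x = w3 2 \<and> (\<forall>j<5. 0 < x!j)}"
      then have x: "admissible x" "weight x = w3 2" "\<forall>j<5. 0 < x!j" by auto
      have lx: "length x = 5" using x(1) unfolding admissible_def by blast
      have "\<forall>i\<ge>2. weight x i = 0" using x(2) w3_2_0 by simp
      then have "\<forall>e\<in>set x. e < 2^2" by (rule entries_small)
      then have "sum_list x = weightL x 0 + 2 * weightL x 1" using sum_w4 by simp
      also have "\<dots> = 9" using x(2) by (simp add: weight_L[symmetric] w3_def)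
      finally have "x \<in> set (map fst FL2)" using inst2(3) x by blast
      then have "x \<in> set ADM2L" unfolding c2_map .
      moreover have "list_all (\<lambda>e. 0 < e) x" using pos[OF lx] x(3) by simp
      ultimately have "x \<in> set (filter (\<lambda>y. list_all (\<lambda>e. 0 < e) y) ADM2L)" by simp
      then show "x \<in> set POS15" unfolding c2_pos .
    next
      fix x assume "x \<in> set POS15"
      then have "x \<in> set (filter (\<lambda>y. list_all (\<lambda>e. 0 < e) y) ADM2L)" unfolding c2_pos .
      then have x: "x \<in> set ADM2L" "list_all (\<lambda>e. 0 < e) x" by auto
      then have "x \<in> set (map fst FL2)" unfolding c2_map by simp
      then have "admissible x \<and> weight x = w3 2 \<and> length x = 5" using inst2(2) by blast
      then show "x \<in> {x. admissible x \<and> weight x = w3 2 \<and> (\<forall>j<5. 0 < x!j)}" using pos x(2) by auto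
    qed
  qed
qed


end
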